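(* Assume $C\succ 0$, $A_1,\dots,A_m$ are linearly independent, and $C^{-1}$ is linearly feasible, i.e. $\mathrm{tr}(A_\ell C^{-1})=b_\ell$ for all $\ell$. Let $X(t)$ be a differentiable solution of the general first-ansatz dynamics $$\mathrm{vec}(\dot X(t)) = G\mathcal{A}^T(\mathcal{A}G\mathcal{A}^T)^{-1}b - \mathrm{vec}(X(t)),\qquad G=\tfrac12\bigl(C^{-1}\otimes X(t) + X(t)\otimes C^{-1}\bigr),$$ with $X(0)\succ 0$ (not necessarily linearly feasible). Then at every time $t$ with $X(t)\succ 0$, $$\frac{d}{dt}\ln\det X(t) = b^T(\mathcal{A}G\mathcal{A}^T)^{-1}b - n \ \ge\ -n,$$ and consequently $X(T)\succ 0$ for every finite $T\ge 0$.
   Context: $C,A_1,\dots,A_m$ are symmetric $n\times n$ matrices and $b\in\mathbb{R}^m$. For an $n\times n$ matrix $M$, $\mathrm{vec}(M)\in\mathbb{R}^{n^2}$ is obtained by stacking the columns of $M$; $\otimes$ is the Kronecker product, with $\mathrm{vec}(ABC)=(C^T\otimes A)\mathrm{vec}(B)$. $\mathcal{A}$ is the $m\times n^2$ matrix whose $\ell$-th row is $\mathrm{vec}(A_\ell)^T$. A matrix $X$ is linearly feasible if $\mathcal{A}\,\mathrm{vec}(X)=b$. *)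

theory Defs
  imports "HOL-Analysis.Analysis"
begin

text \<open>n x n real matrices are real^'n^'n (rows indexed first).
  vec stacks columns: the index (j,i) of vecM M (column j, row i) holds M_ij;
  ordering pairs lexicographically gives the usual column stacking.\<close>

definition vecM :: "real^'n^'n \<Rightarrow> real^('n \<times> 'n)" where
  "vecM M = (\<chi> p. M $ snd p $ fst p)"

text \<open>Kronecker product, indexed compatibly with vecM, so that
  vecM (A ** B ** C) = kron (transpose C) A *v vecM B.\<close>
definition kron :: "real^'n^'n \<Rightarrow> real^'n^'n \<Rightarrow> real^('n \<times> 'n)^('n \<times> 'n)" where
  "kron P Q = (\<chi> p q. P $ fst p $ fst q * Q $ snd p $ snd q)"

definition calA :: "('m \<Rightarrow> real^'n^'n) \<Rightarrow> real^('n \<times> 'n)^'m" where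
  "calA A = (\<chi> l. vecM (A l))"

definition symmetric_mat :: "real^'n^'n \<Rightarrow> bool" where
  "symmetric_mat M \<longleftrightarrow> transpose M = M"

definition posdef :: "real^'n^'n \<Rightarrow> bool" where
  "posdef M \<longleftrightarrow> symmetric_mat M \<and> (\<forall>x. x \<noteq> 0 \<longrightarrow> 0 < x \<bullet> (M *v x))"

definition lin_indep_family :: "('m::finite \<Rightarrow> real^'n^'n) \<Rightarrow> bool" where
  "lin_indep_family A \<longleftrightarrow> (\<forall>c. (\<Sum>l\<in>UNIV. c l *\<^sub>R A l) = 0 \<longrightarrow> (\<forall>l. c l = 0))"

definition lin_feasible :: "('m \<Rightarrow> real^'n^'n) \<Rightarrow> real^'m \<Rightarrow> real^'n^'n \<Rightarrow> bool" where
  "lin_feasible A b X \<longleftrightarrow> calA A *v vecM X = b"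

definition Gmat :: "real^'n^'n \<Rightarrow> real^'n^'n \<Rightarrow> real^('n \<times> 'n)^('n \<times> 'n)" where
  "Gmat C X = (1/2) *\<^sub>R (kron (matrix_inv C) X + kron X (matrix_inv C))"

end

theory Submission
  imports Defs
begin


definition qpd :: "real^'k^'k \<Rightarrow> bool" where
  "qpd M \<longleftrightarrow> (\<forall>x. x \<noteq> 0 \<longrightarrow> 0 < x \<bullet> (M *v x))"

lemma posdef_qpd: "posdef M \<longleftrightarrow> symmetric_mat M \<and> qpd M"
  by (simp add: posdef_def qpd_def)

lemma vecM_nth[simp]: "vecM M $ p = M $ snd p $ fst p" by (simp add: vecM_def)

lemma vecM_inj: "vecM M = vecM N \<Longrightarrow> M = N"
  by (simp add: vec_eq_iff)

lemma vecM_add: "vecM (M + N) = vecM M + vecM N" by (simp add: vec_eq_iff)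
lemma vecM_diff: "vecM (M - N) = vecM M - vecM N" by (simp add: vec_eq_iff)
lemma vecM_scale: "vecM (c *\<^sub>R M) = c *\<^sub>R vecM M" by (simp add: vec_eq_iff)
lemma vecM_zero: "vecM 0 = 0" by (simp add: vec_eq_iff)
lemma vecM_surj: "vecM (\<chi> i j. v $ (j,i)) = v" by (simp add: vec_eq_iff)

lemma sum_UNIV_prod: "sum f (UNIV::('a::finite \<times> 'b::finite) set) = (\<Sum>a\<in>UNIV. \<Sum>b\<in>UNIV. f (a,b))"
  unfolding sum.cartesian_product UNIV_Times_UNIV by simp

lemma kron_vecM: "kron P Q *v vecM B = vecM (Q ** B ** transpose P)"
proof -
  have "(kron P Q *v vecM B) $ (j,i) = (Q ** B ** transpose P) $ i $ j" for i j
  proof -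
    have "(kron P Q *v vecM B) $ (j,i) = (\<Sum>q\<in>UNIV \<times> UNIV. P$j$fst q * Q$i$snd q * B $ snd q $ fst q)"
      by (simp add: matrix_vector_mult_def kron_def UNIV_Times_UNIV)
    also have "\<dots> = (\<Sum>k\<in>UNIV. \<Sum>l\<in>UNIV. P$j$k * Q$i$l * B $ l $ k)"
      by (simp add: sum_UNIV_prod)
    also have "\<dots> = (Q ** B ** transpose P) $ i $ j"
      by (simp add: matrix_matrix_mult_def transpose_def sum_distrib_right sum_distrib_left mult_ac)
    finally show ?thesis .
  qed
  then show ?thesis by (simp add: vec_eq_iff)
qed

lemma inner_vecM: "vecM M \<bullet> vecM N = trace (transpose M ** N)"
proof -
  have "vecM M \<bullet> vecM N = (\<Sum>q\<in>UNIV \<times> UNIV. M $ snd q $ fst q * N $ snd q $ fst q)"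
    by (simp add: inner_vec_def UNIV_Times_UNIV)
  also have "\<dots> = (\<Sum>j\<in>UNIV. \<Sum>i\<in>UNIV. M $ i $ j * N $ i $ j)"
    by (simp add: sum_UNIV_prod)
  also have "\<dots> = trace (transpose M ** N)"
    by (simp add: trace_def matrix_matrix_mult_def transpose_def)
  finally show ?thesis .
qed

lemma calA_T: "transpose (calA A) *v y = vecM (\<Sum>l\<in>UNIV. y$l *\<^sub>R A l)"
  by (simp add: vec_eq_iff matrix_vector_mult_def calA_def transpose_def mult.commute)

lemma calA_mult: "calA A *v v = (\<chi> l. vecM (A l) \<bullet> v)"
  by (simp add: vec_eq_iff matrix_vector_mult_def calA_def inner_vec_def)

lemma inner_mat: fixes M :: "real^'a^'b" shows "x \<bullet> (M *v y) = (transpose M *v x) \<bullet> y"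
  by (simp only: transpose_matrix_vector dot_lmul_matrix)

lemma matrix_inv_props:
  fixes A :: "real^'k^'k"
  assumes "invertible A"
  shows "A ** matrix_inv A = mat 1" "matrix_inv A ** A = mat 1"
proof -
  have "\<exists>A'. A ** A' = mat 1 \<and> A' ** A = mat 1" using assms by (simp add: invertible_def)
  then have "A ** matrix_inv A = mat 1 \<and> matrix_inv A ** A = mat 1"
    unfolding matrix_inv_def by (rule someI_ex)
  then show "A ** matrix_inv A = mat 1" "matrix_inv A ** A = mat 1" by auto
qed

lemma inj_invertible:
  fixes A :: "real^'k^'k"
  assumes "\<And>x. A *v x = 0 \<Longrightarrow> x = 0"
  shows "invertible A"
  using assms by (simp add: invertible_left_inverse matrix_left_invertible_ker)

lemma qpd_invertible: assumes "qpd (A::real^'k^'k)" shows "invertible A"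
proof (rule inj_invertible)
  fix x assume "A *v x = 0"
  then show "x = 0" using assms unfolding qpd_def by (metis inner_zero_right less_irrefl)
qed

lemma qpd_det: "qpd (A::real^'k^'k) \<Longrightarrow> det A \<noteq> 0"
  using qpd_invertible invertible_det_nz by blast

lemma sym_inv:
  fixes A :: "real^'k^'k"
  assumes "symmetric_mat A" "invertible A"
  shows "symmetric_mat (matrix_inv A)"
proof -
  let ?B = "matrix_inv A"
  have 1: "A ** ?B = mat 1" "?B ** A = mat 1" using matrix_inv_props assms(2) by auto
  have "transpose ?B ** A = transpose ?B ** transpose A"
    using assms(1) by (simp add: symmetric_mat_def)
  also have "\<dots> = transpose (A ** ?B)" by (simp only: matrix_transpose_mul)
  also have "\<dots> = mat 1" using 1 by simp
  finally have L: "transpose ?B ** A = mat 1" .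
  have "transpose ?B = transpose ?B ** (A ** ?B)" by (simp only: 1 matrix_mul_rid)
  also have "\<dots> = (transpose ?B ** A) ** ?B" by (simp only: matrix_mul_assoc)
  also have "\<dots> = ?B" by (simp only: L matrix_mul_lid)
  finally show ?thesis unfolding symmetric_mat_def .
qed



lemma cont_quad: "continuous_on S (\<lambda>x::real^'k. x \<bullet> (M *v x))"
  by (intro continuous_intros continuous_on_id
      bounded_linear.continuous_on[OF matrix_vector_mul_bounded_linear])

lemma quad_bound:
  fixes K :: "real^'k^'k"
  shows "\<bar>v \<bullet> (K *v v)\<bar> \<le> real CARD('k) * real CARD('k) * norm K * (norm v * norm v)"
proof -
  have c: "\<bar>K$i$j\<bar> \<le> norm K" for i j
    by (rule order_trans[OF component_le_norm_cart Finite_Cartesian_Product.norm_nth_le])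
  have 1: "\<bar>v \<bullet> (K *v v)\<bar> \<le> norm v * norm (K *v v)" by (rule Cauchy_Schwarz_ineq2)
  have 2: "norm (K *v v) \<le> onorm ((*v) K) * norm v"
    by (rule onorm[OF matrix_vector_mul_bounded_linear])
  have 3: "onorm ((*v) K) \<le> real CARD('k) * real CARD('k) * norm K"
    by (rule onorm_le_matrix_component) (rule c)
  have 4: "norm (K *v v) \<le> real CARD('k) * real CARD('k) * norm K * norm v"
    using 2 mult_right_mono[OF 3 norm_ge_zero[of v]] by linarith
  have "norm v * norm (K *v v) \<le> norm v * (real CARD('k) * real CARD('k) * norm K * norm v)"
    by (rule mult_left_mono[OF 4 norm_ge_zero])
  then show ?thesis using 1 by (simp add: mult_ac)
qed

lemma open_qpd:
  fixes M :: "real^'k^'k"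
  assumes "qpd M"
  shows "\<exists>e>0. \<forall>N. norm (N - M) < e \<longrightarrow> qpd N"
proof -
  obtain w :: "real^'k" where w: "norm w = 1" using vector_choose_size[of 1] by auto
  have "\<exists>u\<in>sphere 0 1. \<forall>v\<in>sphere 0 1. u \<bullet> (M *v u) \<le> v \<bullet> (M *v v)"
    by (rule continuous_attains_inf) (use w in \<open>auto intro: cont_quad\<close>)
  then obtain u where u: "norm u = 1" and umin: "\<And>v. norm v = 1 \<Longrightarrow> u \<bullet> (M *v u) \<le> v \<bullet> (M *v v)"
    by auto
  define m where "m = u \<bullet> (M *v u)"
  have "u \<noteq> 0" using u by auto
  then have m: "m > 0" using assms unfolding qpd_def m_def by blast
  define K where "K = real CARD('k) * real CARD('k) + 1"
  have K: "K > 0" by (simp add: K_def add_pos_nonneg)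
  show ?thesis
  proof (intro exI[of _ "m / K"] conjI allI impI)
    show "m / K > 0" using m K by simp
    fix N :: "real^'k^'k" assume N: "norm (N - M) < m / K"
    show "qpd N" unfolding qpd_def
    proof (intro allI impI)
      fix x :: "real^'k" assume x: "x \<noteq> 0"
      define v where "v = (1 / norm x) *\<^sub>R x"
      have nv: "norm v = 1" using x by (simp add: v_def)
      have xv: "x = norm x *\<^sub>R v" using x by (simp add: v_def)
      have b: "\<bar>v \<bullet> ((N - M) *v v)\<bar> \<le> real CARD('k) * real CARD('k) * norm (N - M)"
        using quad_bound[of v "N - M"] nv by simp
      have "real CARD('k) * real CARD('k) * norm (N - M) \<le> K * norm (N - M)"
        by (simp add: K_def mult_right_mono)
      also have "\<dots> < K * (m / K)" by (rule mult_strict_left_mono[OF N K])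
      also have "\<dots> = m" using K by simp
      finally have b2: "\<bar>v \<bullet> ((N - M) *v v)\<bar> < m" using b by linarith
      have "v \<bullet> (N *v v) = v \<bullet> (M *v v) + v \<bullet> ((N - M) *v v)"
        by (simp add: matrix_vector_mult_diff_rdistrib inner_diff_right)
      moreover have "m \<le> v \<bullet> (M *v v)" using umin[OF nv] m_def by simp
      ultimately have pv: "v \<bullet> (N *v v) > 0" using b2 by linarith
      have "x \<bullet> (N *v x) = (norm x * norm x) * (v \<bullet> (N *v v))"
        by (subst (1 2) xv) (simp add: matrix_vector_mult_scaleR)
      then show "0 < x \<bullet> (N *v x)" using pv x by simp
    qed
  qed
qed

lemma psd_qpd:
  fixes M :: "real^'k^'k"
  assumes sym: "symmetric_mat M" and psd: "\<And>x. 0 \<le> x \<bullet> (M *v x)"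
    and inj: "\<And>x. M *v x = 0 \<Longrightarrow> x = 0"
  shows "qpd M"
  unfolding qpd_def
proof (intro allI impI)
  fix x :: "real^'k" assume x: "x \<noteq> 0"
  show "0 < x \<bullet> (M *v x)"
  proof (rule ccontr)
    assume "\<not> 0 < x \<bullet> (M *v x)"
    then have x0: "x \<bullet> (M *v x) = 0" using psd[of x] by linarith
    define y where "y = M *v x"
    define a where "a = y \<bullet> y"
    define c where "c = y \<bullet> (M *v y)"
    have c0: "c \<ge> 0" using psd c_def by simp
    have tM: "transpose M = M" using sym by (simp add: symmetric_mat_def)
    have xy: "x \<bullet> (M *v y) = a"
      unfolding a_def y_def by (subst inner_mat, subst tM, rule refl)
    have exp: "0 \<le> 2 * t * a + t * t * c" for t
    proof -
      have "0 \<le> (x + t *\<^sub>R y) \<bullet> (M *v (x + t *\<^sub>R y))" by (rule psd)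
      also have "\<dots> = x \<bullet> (M *v x) + t * (x \<bullet> (M *v y)) + t * (y \<bullet> (M *v x)) + t * t * c"
        unfolding c_def
        by (simp only: matrix_vector_right_distrib matrix_vector_mult_scaleR inner_add_left
            inner_add_right inner_scaleR_left inner_scaleR_right) (simp add: algebra_simps)
      also have "\<dots> = 2 * t * a + t * t * c" using x0 xy by (simp add: a_def y_def)
      finally show ?thesis .
    qed
    have a0: "a = 0"
    proof (rule ccontr)
      assume "a \<noteq> 0"
      then have ap: "a > 0" unfolding a_def by simp
      define t where "t = - a / (c + 1)"
      have cc: "c / (c + 1) < 1" using c0 by simp
      have tc: "t * c = - (a * (c / (c + 1)))" by (simp add: t_def)
      have "a * (c / (c + 1)) < a * 1" by (rule mult_strict_left_mono[OF cc ap])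
      then have tc2: "2 * a + t * c > 0" using tc ap by linarith
      have "a / (c + 1) > 0" using ap c0 by simp
      then have tn: "t < 0" by (simp add: t_def)
      have "2 * t * a + t * t * c = t * (2 * a + t * c)" by (simp add: algebra_simps)
      also have "\<dots> < 0" by (rule mult_neg_pos[OF tn tc2])
      finally have "2 * t * a + t * t * c < 0" .
      then show False using exp[of t] by linarith
    qed
    then have "y = 0" unfolding a_def by simp
    then have "x = 0" using inj y_def by simp
    then show False using x by simp
  qed
qed

lemma continuous_on_det:
  fixes f :: "real \<Rightarrow> real^'k^'k"
  assumes "continuous_on S f"
  shows "continuous_on S (\<lambda>s. det (f s))"
  unfolding det_def
  by (intro continuous_intros continuous_on_component assms)

lemma cont_quad2:
  fixes f :: "real \<Rightarrow> real^'k^'k"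
  assumes "continuous_on S f"
  shows "continuous_on S (\<lambda>s. x \<bullet> (f s *v x))"
proof -
  have eq: "(\<lambda>s. x \<bullet> (f s *v x)) = (\<lambda>s. \<Sum>i\<in>UNIV. x$i * (\<Sum>j\<in>UNIV. f s $ i $ j * x$j))"
    by (simp add: inner_vec_def matrix_vector_mult_def)
  show ?thesis unfolding eq by (intro continuous_intros continuous_on_component assms)
qed

lemma det_inj:
  assumes "det (A::real^'k^'k) \<noteq> 0" "A *v x = 0" shows "x = 0"
proof -
  have "inj ((*v) A)" using assms(1) by (simp add: inj_matrix_vector_mult invertible_det_nz)
  moreover have "A *v x = A *v 0" using assms(2) by simp
  ultimately show ?thesis by (rule injD)
qed

lemma path_qpd:
  fixes f :: "real \<Rightarrow> real^'k^'k"
  assumes T: "0 \<le> T" and cont: "continuous_on {0..T} f"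
    and sym: "\<And>s. s \<in> {0..T} \<Longrightarrow> symmetric_mat (f s)"
    and f0: "qpd (f 0)"
    and nz: "\<And>s. s \<in> {0..T} \<Longrightarrow> (\<And>u. u \<in> {0..<s} \<Longrightarrow> qpd (f u)) \<Longrightarrow> det (f s) \<noteq> 0"
  shows "qpd (f T)"
proof -
  define S where "S = {s\<in>{0..T}. \<forall>u\<in>{0..s}. qpd (f u)}"
  have S0: "0 \<in> S" using T f0 by (auto simp: S_def)
  have bdd: "bdd_above S" by (auto simp: S_def bdd_above_def)
  have ne: "S \<noteq> {}" using S0 by auto
  define \<sigma> where "\<sigma> = Sup S"
  have s0: "0 \<le> \<sigma>" using cSup_upper[OF S0 bdd] \<sigma>_def by simp
  have sT: "\<sigma> \<le> T" unfolding \<sigma>_def by (rule cSup_least[OF ne]) (auto simp: S_def)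
  have below: "qpd (f u)" if u0: "0 \<le> u" and us: "u < \<sigma>" for u
  proof -
    have "u < Sup S" using us unfolding \<sigma>_def .
    then obtain s where "s \<in> S" "u < s" using less_cSup_iff[OF ne bdd, of u] by auto
    then show ?thesis using u0 by (auto simp: S_def)
  qed
  have qs: "qpd (f \<sigma>)"
  proof (cases "\<sigma> = 0")
    case True then show ?thesis using f0 by simp
  next
    case False
    then have sp: "0 < \<sigma>" using s0 by simp
    have nzs: "det (f \<sigma>) \<noteq> 0" using nz[of \<sigma>] s0 sT below by auto
    show ?thesis
    proof (rule psd_qpd)
      show "symmetric_mat (f \<sigma>)" using sym s0 sT by auto
      show "\<And>x. f \<sigma> *v x = 0 \<Longrightarrow> x = 0" using det_inj nzs by blast
    next
      fix x :: "real^'k"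
      have "continuous_on {0..\<sigma>} (\<lambda>s. x \<bullet> (f s *v x))"
        by (rule continuous_on_subset[OF cont_quad2[OF cont]]) (use sT in auto)
      then have "((\<lambda>s. x \<bullet> (f s *v x)) \<longlongrightarrow> x \<bullet> (f \<sigma> *v x)) (at \<sigma> within {0..\<sigma>})"
        using s0 by (simp add: continuous_on_def)
      then have lim: "((\<lambda>s. x \<bullet> (f s *v x)) \<longlongrightarrow> x \<bullet> (f \<sigma> *v x)) (at_left \<sigma>)"
        using at_within_Icc_at_left[OF sp] by simp
      have ev: "eventually (\<lambda>s. 0 \<le> x \<bullet> (f s *v x)) (at_left \<sigma>)"
        using eventually_at_left_real[OF sp]
      proof (rule eventually_mono)
        fix s assume "s \<in> {0<..<\<sigma>}"
        then have "qpd (f s)" using below by auto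
        then show "0 \<le> x \<bullet> (f s *v x)" unfolding qpd_def
          by (cases "x = 0") (auto intro: less_imp_le)
      qed
      show "0 \<le> x \<bullet> (f \<sigma> *v x)"
        by (rule tendsto_lowerbound[OF lim ev]) simp
    qed
  qed
  have sS: "\<sigma> \<in> S" unfolding S_def
  proof (intro CollectI conjI ballI)
    show "\<sigma> \<in> {0..T}" using s0 sT by simp
    fix u assume "u \<in> {0..\<sigma>}"
    then have "0 \<le> u" "u < \<sigma> \<or> u = \<sigma>" by auto
    then show "qpd (f u)" using below qs by auto
  qed
  have "\<sigma> = T"
  proof (rule ccontr)
    assume "\<sigma> \<noteq> T" then have lt: "\<sigma> < T" using sT by simp
    obtain e where e: "e > 0" "\<And>N. norm (N - f \<sigma>) < e \<Longrightarrow> qpd N" using open_qpd[OF qs] by auto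
    obtain d where d: "d > 0" "\<And>s. s \<in> {0..T} \<Longrightarrow> dist s \<sigma> < d \<Longrightarrow> dist (f s) (f \<sigma>) < e"
      using continuous_on_iff[THEN iffD1, OF cont, rule_format, of \<sigma> e] s0 sT e(1) by auto
    define s' where "s' = min T (\<sigma> + d/2)"
    have "s' \<in> S"
      unfolding S_def
    proof (intro CollectI conjI ballI)
      show "s' \<in> {0..T}" using s0 lt d by (auto simp: s'_def)
      fix u assume u: "u \<in> {0..s'}"
      show "qpd (f u)"
      proof (cases "u \<le> \<sigma>")
        case True then show ?thesis using sS u by (auto simp: S_def)
      next
        case False
        then have "dist u \<sigma> < d" using u d by (auto simp: s'_def dist_real_def)
        then have "dist (f u) (f \<sigma>) < e" using d(2)[of u] u by (auto simp: s'_def)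
        then show ?thesis using e(2) by (simp add: dist_norm)
      qed
    qed
    then have "s' \<le> \<sigma>" unfolding \<sigma>_def using bdd by (rule cSup_upper)
    then show False using lt d by (auto simp: s'_def)
  qed
  then show ?thesis using qs by simp
qed



definition lpath :: "real^'k^'k \<Rightarrow> real \<Rightarrow> real^'k^'k" where
  "lpath M s = (1 - s) *\<^sub>R mat 1 + s *\<^sub>R M"

lemma lpath_quad: "x \<bullet> (lpath M s *v x) = (1 - s) * (x \<bullet> x) + s * (x \<bullet> (M *v x))"
  by (simp add: lpath_def matrix_vector_mult_add_rdistrib scaleR_matrix_vector_assoc[symmetric]
      inner_add_right)

lemma lpath_qpd:
  assumes "qpd M" "0 \<le> s" "s \<le> 1"
  shows "qpd (lpath M s)"
  unfolding qpd_def
proof (intro allI impI)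
  fix x :: "real^'a" assume x: "x \<noteq> 0"
  have a: "x \<bullet> x > 0" using x by simp
  have b: "x \<bullet> (M *v x) > 0" using assms(1) x by (simp add: qpd_def)
  show "0 < x \<bullet> (lpath M s *v x)"
  proof (cases "s = 0")
    case True then show ?thesis using a by (simp add: lpath_quad)
  next
    case False
    then have "s > 0" using assms by simp
    then have "s * (x \<bullet> (M *v x)) > 0" using b by simp
    moreover have "(1 - s) * (x \<bullet> x) \<ge> 0" using assms a by simp
    ultimately show ?thesis by (simp add: lpath_quad)
  qed
qed

lemma lpath_cont: "continuous_on S (lpath M)"
  unfolding lpath_def by (intro continuous_intros)

lemma transpose_add': "transpose (A + B) = transpose A + transpose (B::real^'a^'b)"
  by (simp add: vec_eq_iff transpose_def)

lemma lpath_sym: "symmetric_mat M \<Longrightarrow> symmetric_mat (lpath M s)"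
  by (simp add: lpath_def symmetric_mat_def transpose_scalar transpose_add')

lemma lpath_0[simp]: "lpath M 0 = mat 1" by (simp add: lpath_def)
lemma lpath_1[simp]: "lpath M 1 = M" by (simp add: lpath_def)

lemma qpd_det_pos:
  fixes M :: "real^'k^'k"
  assumes "qpd M"
  shows "det M > 0"
proof (rule ccontr)
  assume "\<not> det M > 0"
  then have "det (lpath M 1) \<le> 0" by simp
  moreover have "0 \<le> det (lpath M 0)" by simp
  moreover have "continuous_on {0..1} (\<lambda>s. det (lpath M s))"
    by (rule continuous_on_det[OF lpath_cont])
  ultimately obtain s where s: "0 \<le> s" "s \<le> 1" "det (lpath M s) = 0"
    using IVT2'[of "\<lambda>s. det (lpath M s)" 1 0 0] by auto
  then show False using qpd_det[OF lpath_qpd[OF assms s(1,2)]] by simp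
qed

lemma transpose_kron: "transpose (kron P Q) = kron (transpose P) (transpose Q)"
  by (simp add: vec_eq_iff kron_def transpose_def)

lemma sym_kron: "symmetric_mat P \<Longrightarrow> symmetric_mat Q \<Longrightarrow> symmetric_mat (kron P Q)"
  by (simp add: symmetric_mat_def transpose_kron)

lemma kron_id: "kron (mat 1) (mat 1) = (mat 1 :: real^('k::finite \<times> 'k)^('k \<times> 'k))"
  by (auto simp: vec_eq_iff kron_def mat_def prod_eq_iff)

lemma qpd_id: "qpd (mat 1 :: real^'k^'k)"
  by (simp add: qpd_def)

lemma kron_inj:
  fixes P Q :: "real^'k^'k"
  assumes P: "qpd P" "symmetric_mat P" and Q: "qpd Q"
    and v: "kron P Q *v v = 0"
  shows "v = 0"
proof -
  define B where "B = (\<chi> i j. v $ (j,i) :: real^'k^'k)"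
  have vB: "v = vecM B" unfolding B_def by (rule vecM_surj[symmetric])
  have "vecM (Q ** B ** transpose P) = vecM 0" using v by (simp add: vB kron_vecM vecM_zero)
  then have 0: "Q ** B ** P = 0" using P(2) vecM_inj by (simp add: symmetric_mat_def)
  have iP: "P ** matrix_inv P = mat 1" using matrix_inv_props qpd_invertible[OF P(1)] by blast
  have iQ: "matrix_inv Q ** Q = mat 1" using matrix_inv_props qpd_invertible[OF Q] by blast
  have "B = (matrix_inv Q ** Q) ** B ** (P ** matrix_inv P)" by (simp add: iP iQ)
  also have "\<dots> = matrix_inv Q ** (Q ** B ** P) ** matrix_inv P" by (simp add: matrix_mul_assoc)
  also have "\<dots> = 0" by (simp add: 0)
  finally show ?thesis by (simp add: vB vecM_zero)
qed

lemma kron_qpd: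
  fixes P Q :: "real^'k^'k"
  assumes P: "qpd P" "symmetric_mat P" and Q: "qpd Q" "symmetric_mat Q"
  shows "qpd (kron P Q)"
proof -
  define h where "h s = kron (lpath P s) (lpath Q s)" for s
  have h1: "h 1 = kron P Q" by (simp add: h_def)
  have "qpd (h 1)"
  proof (rule path_qpd)
    show "continuous_on {0..1} h"
    proof -
      have e: "h = (\<lambda>s. \<chi> p q. lpath P s $ fst p $ fst q * lpath Q s $ snd p $ snd q)"
        by (simp add: h_def kron_def fun_eq_iff)
      show ?thesis unfolding e
        by (intro continuous_intros continuous_on_component lpath_cont)
    qed
    show "symmetric_mat (h s)" for s
      using P(2) Q(2) by (simp add: h_def sym_kron lpath_sym)
    show "qpd (h 0)" by (simp add: h_def kron_id qpd_id)
    show "det (h s) \<noteq> 0" if "s \<in> {0..1}" for s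
    proof -
      have "invertible (h s)"
      proof (rule inj_invertible)
        fix x assume hx: "h s *v x = 0"
        have s: "0 \<le> s" "s \<le> 1" using that by auto
        show "x = 0"
          using kron_inj[OF lpath_qpd[OF P(1) s] lpath_sym[OF P(2)] lpath_qpd[OF Q(1) s]] hx
          unfolding h_def by blast
      qed
      then show ?thesis by (simp add: invertible_det_nz)
    qed
  qed simp
  then show ?thesis using h1 by simp
qed



lemma hfd_prod_within:
  assumes "\<And>x. x \<in> A \<Longrightarrow> (f x has_field_derivative f' x) (at z within S)"
  shows   "((\<lambda>u. \<Prod>x\<in>A. f x u) has_field_derivative (\<Sum>x\<in>A. f' x * (\<Prod>y\<in>A-{x}. f y z))) (at z within S)"
  using assms
proof (induction A rule: infinite_finite_induct)
  case (insert x A)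
  have eq: "insert x A - {y} = insert x (A - {y})" if "y \<in> A" for y
    using insert.hyps that by auto
  show ?case
    using insert.hyps
    by (auto intro!: derivative_eq_intros insert.prems insert.IH sum.cong
             simp: sum_distrib_left sum_distrib_right eq)
qed auto

lemma entry_deriv:
  fixes X :: "real \<Rightarrow> real^'n^'m"
  assumes "(X has_vector_derivative D) F"
  shows "((\<lambda>s. X s $ i $ j) has_real_derivative D $ i $ j) F"
proof -
  have bl: "bounded_linear (\<lambda>M::real^'n^'m. M $ i $ j)"
    using bounded_linear_compose[OF bounded_linear_vec_nth[of j] bounded_linear_vec_nth[of i]]
    by (simp add: o_def)
  show ?thesis
    using bounded_linear.has_vector_derivative[OF bl assms]
    by (simp add: has_real_derivative_iff_has_vector_derivative)
qed

lemma det_replace_row: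
  fixes X D :: "real^'n^'n"
  shows "det (\<chi> i. if i = k then D$i else X$i) =
    (\<Sum>p\<in>{p. p permutes (UNIV::'n set)}. of_int (sign p) * (D$k$p k * (\<Prod>y\<in>UNIV-{k}. X$y$p y)))"
proof -
  have "(\<Prod>i\<in>UNIV. (\<chi> i. if i = k then D$i else X$i) $ i $ p i) = D$k$p k * (\<Prod>y\<in>UNIV-{k}. X$y$p y)" for p
  proof -
    have "(\<Prod>i\<in>UNIV. (\<chi> i. if i = k then D$i else X$i) $ i $ p i) =
        (\<chi> i. if i = k then D$i else X$i) $ k $ p k * (\<Prod>i\<in>UNIV-{k}. (\<chi> i. if i = k then D$i else X$i) $ i $ p i)"
      by (rule prod.remove) auto
    also have "(\<Prod>i\<in>UNIV-{k}. (\<chi> i. if i = k then D$i else X$i) $ i $ p i) = (\<Prod>y\<in>UNIV-{k}. X$y$p y)"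
      by (rule prod.cong) auto
    finally show ?thesis by simp
  qed
  then show ?thesis unfolding det_def by simp
qed

lemma det_deriv:
  fixes X :: "real \<Rightarrow> real^'n^'n"
  assumes "(X has_vector_derivative D) (at t within S)"
  shows "((\<lambda>s. det (X s)) has_real_derivative
            (\<Sum>k\<in>UNIV. det (\<chi> i. if i = k then D$i else X t $ i))) (at t within S)"
proof -
  have e: "\<And>i j. ((\<lambda>s. X s $ i $ j) has_real_derivative D $ i $ j) (at t within S)"
    by (rule entry_deriv[OF assms])
  have "((\<lambda>s. det (X s)) has_real_derivative
      (\<Sum>p\<in>{p. p permutes (UNIV::'n set)}. of_int (sign p) *
          (\<Sum>k\<in>UNIV. D$k$p k * (\<Prod>y\<in>UNIV-{k}. X t$y$p y)))) (at t within S)"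
    unfolding det_def
    by (intro DERIV_sum DERIV_cmult hfd_prod_within e)
  also have "(\<Sum>p\<in>{p. p permutes (UNIV::'n set)}. of_int (sign p) *
          (\<Sum>k\<in>UNIV. D$k$p k * (\<Prod>y\<in>UNIV-{k}. X t$y$p y)))
     = (\<Sum>k\<in>UNIV. det (\<chi> i. if i = k then D$i else X t $ i))"
    unfolding det_replace_row sum_distrib_left by (rule sum.swap)
  finally show ?thesis .
qed

lemma det_replace_row_inv:
  fixes X D :: "real^'n^'n"
  assumes "invertible X"
  shows "det (\<chi> i. if i = k then D$i else X$i) = (D ** matrix_inv X) $ k $ k * det X"
proof -
  define x where "x = (D ** matrix_inv X) $ k"
  have iX: "matrix_inv X ** X = mat 1" using matrix_inv_props[OF assms] by blast
  have Dk: "D$k = (\<Sum>i\<in>UNIV. x$i *s row i X)"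
  proof -
    have "D = (D ** matrix_inv X) ** X" by (simp add: iX flip: matrix_mul_assoc)
    then have "D$k$j = ((D ** matrix_inv X) ** X)$k$j" for j by simp
    then show ?thesis
      by (simp add: vec_eq_iff x_def row_def matrix_matrix_mult_def[of "D ** matrix_inv X" X])
  qed
  have r: "row i X = X$i" for i by (simp add: row_def vec_eq_iff)
  have "det (\<chi> i. if i = k then D$i else X$i) =
        det (\<chi> i. if i = k then (\<Sum>i\<in>UNIV. x$i *s row i X) else row i X)"
    using Dk by (intro arg_cong[where f=det]) (auto simp: vec_eq_iff r)
  also have "\<dots> = x$k * det X" by (rule cramer_lemma_transpose)
  finally show ?thesis by (simp add: x_def)
qed

lemma det_deriv_inv:
  fixes X :: "real \<Rightarrow> real^'n^'n"
  assumes "(X has_vector_derivative D) (at t within S)" "invertible (X t)"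
  shows "((\<lambda>s. det (X s)) has_real_derivative
            (det (X t) * trace (D ** matrix_inv (X t)))) (at t within S)"
proof -
  have "(\<Sum>k\<in>UNIV. det (\<chi> i. if i = k then D$i else X t $ i)) = det (X t) * trace (D ** matrix_inv (X t))"
    by (simp add: det_replace_row_inv[OF assms(2)] trace_def sum_distrib_left mult.commute)
  then show ?thesis using det_deriv[OF assms(1)] by simp
qed



lemma trace_scale: "trace (c *\<^sub>R (M::real^'n^'n)) = c * trace M"
  by (simp add: trace_def sum_distrib_left)

lemma qpd_inv:
  fixes C :: "real^'k^'k"
  assumes "qpd C"
  shows "qpd (matrix_inv C)"
  unfolding qpd_def
proof (intro allI impI)
  fix x :: "real^'k" assume x: "x \<noteq> 0"
  have i: "C ** matrix_inv C = mat 1" using matrix_inv_props qpd_invertible[OF assms] by blast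
  define y where "y = matrix_inv C *v x"
  have Cy: "C *v y = x" by (simp add: y_def matrix_vector_mul_assoc i)
  then have "y \<noteq> 0" using x by auto
  then have "0 < y \<bullet> (C *v y)" using assms by (simp add: qpd_def)
  also have "y \<bullet> (C *v y) = x \<bullet> (matrix_inv C *v x)" by (simp only: Cy) (simp only: y_def inner_commute)
  finally show "0 < x \<bullet> (matrix_inv C *v x)" .
qed

lemma Gmat_mult: "Gmat C X *v w = (1/2) *\<^sub>R (kron (matrix_inv C) X *v w + kron X (matrix_inv C) *v w)"
  by (simp add: Gmat_def scaleR_matrix_vector_assoc[symmetric] matrix_vector_mult_add_rdistrib)

lemma Gmat_qpd:
  assumes "qpd (matrix_inv C)" "symmetric_mat (matrix_inv C)" "qpd X" "symmetric_mat X"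
  shows "qpd (Gmat C X)"
  unfolding qpd_def
proof (intro allI impI)
  fix w :: "real^('a \<times> 'a)" assume w: "w \<noteq> 0"
  have 1: "0 < w \<bullet> (kron (matrix_inv C) X *v w)" using kron_qpd[OF assms] w by (simp add: qpd_def)
  have 2: "0 < w \<bullet> (kron X (matrix_inv C) *v w)" using kron_qpd[OF assms(3,4,1,2)] w by (simp add: qpd_def)
  show "0 < w \<bullet> (Gmat C X *v w)" using 1 2 by (simp add: Gmat_mult inner_add_right)
qed

lemma sym_sum:
  assumes "\<And>l. symmetric_mat (A l)"
  shows "symmetric_mat (\<Sum>l\<in>UNIV. (y::real^'m) $ l *\<^sub>R (A l :: real^'n^'n))"
proof -
  have e: "A l $ i $ j = A l $ j $ i" for l i j
  proof -
    have "transpose (A l) $ i $ j = A l $ i $ j" using assms[of l] by (simp add: symmetric_mat_def)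
    then show ?thesis by (simp add: transpose_def)
  qed
  show ?thesis unfolding symmetric_mat_def
    by (simp add: vec_eq_iff transpose_def e)
qed

lemma transpose_mult3: "transpose (P ** Q ** R) = transpose R ** transpose Q ** transpose (P::real^'n^'n)"
  by (simp add: matrix_transpose_mul matrix_mul_assoc)

lemma mm_diff: "(P - Q) ** R = P ** R - Q ** (R::real^'n^'n)"
  by (simp add: vec_eq_iff matrix_matrix_mult_def sum_subtractf left_diff_distrib)
lemma mm_add: "(P + Q) ** R = P ** R + Q ** (R::real^'n^'n)"
  by (simp add: vec_eq_iff matrix_matrix_mult_def sum.distrib distrib_right)
lemma mm_scale: "(c *\<^sub>R P) ** R = c *\<^sub>R (P ** (R::real^'n^'n))"
  by (simp add: vec_eq_iff matrix_matrix_mult_def sum_distrib_left mult.assoc)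

context
  fixes C :: "real^'n::finite^'n" and A :: "'m::finite \<Rightarrow> real^'n^'n" and b :: "real^'m"
    and X Xd :: "real \<Rightarrow> real^'n^'n"
  assumes C_pd: "posdef C"
    and A_sym: "\<And>l. symmetric_mat (A l)"
    and A_indep: "lin_indep_family A"
    and Cinv_feas: "lin_feasible A b (matrix_inv C)"
    and deriv: "\<And>t. t \<ge> 0 \<Longrightarrow> (X has_vector_derivative Xd t) (at t within {0..})"
    and ode: "\<And>t. t \<ge> 0 \<Longrightarrow>
       vecM (Xd t) = Gmat C (X t) *v (transpose (calA A) *v
           (matrix_inv (calA A ** Gmat C (X t) ** transpose (calA A)) *v b)) - vecM (X t)"
    and X0: "posdef (X 0)"
begin

definition "Ci = matrix_inv C"
definition "MM t = calA A ** Gmat C (X t) ** transpose (calA A)"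
definition "yy t = matrix_inv (MM t) *v b"
definition "SS t = (\<Sum>l\<in>UNIV. yy t $ l *\<^sub>R A l)"
definition "WW t = (1/2) *\<^sub>R (X t ** SS t ** Ci + Ci ** SS t ** transpose (X t))"

lemma Ci_sym: "symmetric_mat Ci"
  using sym_inv[of C] qpd_invertible[of C] C_pd unfolding Ci_def posdef_qpd by blast

lemma Ci_qpd: "qpd Ci"
  using qpd_inv[of C] C_pd unfolding Ci_def posdef_qpd by blast

lemma SS_sym: "symmetric_mat (SS t)"
  unfolding SS_def by (rule sym_sum[OF A_sym])

lemma Xd_form: "t \<ge> 0 \<Longrightarrow> Xd t = WW t - X t"
proof -
  assume t: "t \<ge> 0"
  have tCi: "transpose Ci = Ci" using Ci_sym by (simp add: symmetric_mat_def)
  have "vecM (Xd t) = Gmat C (X t) *v vecM (SS t) - vecM (X t)"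
    unfolding SS_def yy_def MM_def using ode[OF t] by (simp only: calA_T)
  also have "\<dots> = vecM (WW t - X t)"
    by (simp add: Gmat_mult kron_vecM WW_def vecM_add vecM_scale vecM_diff Ci_def[symmetric] tCi)
  finally show ?thesis by (rule vecM_inj)
qed

lemma WW_sym: "symmetric_mat (WW t)"
proof -
  have tCi: "transpose Ci = Ci" using Ci_sym by (simp add: symmetric_mat_def)
  have tS: "transpose (SS t) = SS t" using SS_sym by (simp add: symmetric_mat_def)
  show ?thesis unfolding symmetric_mat_def WW_def
    by (simp add: transpose_scalar transpose_add' transpose_mult3 tCi tS add.commute)
qed

lemma X_sym: "t \<ge> 0 \<Longrightarrow> symmetric_mat (X t)"
proof -
  assume t: "t \<ge> 0"
  have "X t $ i $ j = X t $ j $ i" for i j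
  proof -
    define d where "d s = X s $ i $ j - X s $ j $ i" for s
    define g where "g s = exp s * d s" for s
    have "g s = 0" if s: "s \<in> {0..}" for s
    proof -
      have "\<exists>c. \<forall>x\<in>{0..}. g x = (c::real)"
      proof (rule has_field_derivative_zero_constant)
        show "convex {0::real..}" by (rule convex_real_interval)
        fix x :: real assume x: "x \<in> {0..}"
        have dd: "(d has_real_derivative (Xd x $ i $ j - Xd x $ j $ i)) (at x within {0..})"
          unfolding d_def using x
          by (intro derivative_intros entry_deriv[OF deriv]) auto
        have "Xd x $ i $ j - Xd x $ j $ i = - d x"
          using Xd_form[of x] WW_sym[of x] x unfolding d_def symmetric_mat_def
          by (simp add: vec_eq_iff transpose_def)
        then have dd': "(d has_real_derivative (- d x)) (at x within {0..})" using dd by simp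
        show "(g has_real_derivative 0) (at x within {0..})"
          unfolding g_def using DERIV_mult[OF DERIV_exp[THEN DERIV_subset] dd'] by simp
      qed
      then obtain c where c: "\<And>x. x \<in> {0..} \<Longrightarrow> g x = c" by auto
      have "transpose (X 0) $ i $ j = X 0 $ i $ j" using X0 by (simp add: posdef_def symmetric_mat_def)
      then have "g 0 = 0" unfolding g_def d_def by (simp add: transpose_def)
      then show ?thesis using c[of s] c[of 0] s by simp
    qed
    then have "d t = 0" using t by (simp add: g_def)
    then show ?thesis by (simp add: d_def)
  qed
  then show ?thesis unfolding symmetric_mat_def by (simp add: vec_eq_iff transpose_def)
qed


lemma G_qpd: "t \<ge> 0 \<Longrightarrow> posdef (X t) \<Longrightarrow> qpd (Gmat C (X t))"
  using Gmat_qpd[OF Ci_qpd[unfolded Ci_def] Ci_sym[unfolded Ci_def]] by (simp add: posdef_qpd)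

lemma MM_qpd:
  assumes t: "t \<ge> 0" and pX: "posdef (X t)"
  shows "qpd (MM t)"
  unfolding qpd_def
proof (intro allI impI)
  fix y :: "real^'m" assume y: "y \<noteq> 0"
  define w where "w = transpose (calA A) *v y"
  have "w \<noteq> 0"
  proof
    assume "w = 0"
    then have "vecM (\<Sum>l\<in>UNIV. y$l *\<^sub>R A l) = 0" by (simp only: w_def calA_T)
    then have "vecM (\<Sum>l\<in>UNIV. y$l *\<^sub>R A l) = vecM 0" by (simp only: vecM_zero)
    then have "(\<Sum>l\<in>UNIV. y$l *\<^sub>R A l) = 0" by (rule vecM_inj)
    then have "\<forall>l. y$l = 0" using A_indep unfolding lin_indep_family_def by blast
    then show False using y by (simp add: vec_eq_iff)
  qed
  then have pos: "0 < w \<bullet> (Gmat C (X t) *v w)" using G_qpd[OF t pX] by (simp add: qpd_def)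
  have "y \<bullet> (MM t *v y) = y \<bullet> (calA A *v (Gmat C (X t) *v w))"
    by (simp only: MM_def w_def matrix_vector_mul_assoc matrix_mul_assoc)
  also have "\<dots> = w \<bullet> (Gmat C (X t) *v w)" unfolding w_def by (rule inner_mat)
  finally show "0 < y \<bullet> (MM t *v y)" using pos by simp
qed

lemma MM_yy: "t \<ge> 0 \<Longrightarrow> posdef (X t) \<Longrightarrow> MM t *v yy t = b"
proof -
  assume "t \<ge> 0" "posdef (X t)"
  then have "invertible (MM t)" using MM_qpd qpd_invertible by blast
  then have "MM t ** matrix_inv (MM t) = mat 1" using matrix_inv_props by blast
  then show ?thesis by (simp add: yy_def matrix_vector_mul_assoc)
qed

lemma yy_nonneg:
  assumes t: "t \<ge> 0" and pX: "posdef (X t)"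
  shows "0 \<le> b \<bullet> yy t"
proof -
  have "b \<bullet> yy t = yy t \<bullet> (MM t *v yy t)" by (simp only: MM_yy[OF t pX] inner_commute)
  also have "\<dots> \<ge> 0" using MM_qpd[OF t pX] unfolding qpd_def
    by (cases "yy t = 0") (auto intro: less_imp_le)
  finally show ?thesis .
qed

lemma trace_val:
  assumes t: "t \<ge> 0" and pX: "posdef (X t)"
  shows "trace (Xd t ** matrix_inv (X t)) = b \<bullet> yy t - real CARD('n)"
proof -
  let ?X = "X t" and ?Xi = "matrix_inv (X t)" and ?S = "SS t"
  have inv: "invertible ?X" using pX qpd_invertible unfolding posdef_qpd by blast
  have XXi: "?X ** ?Xi = mat 1" "?Xi ** ?X = mat 1" using matrix_inv_props[OF inv] by auto
  have tX: "transpose ?X = ?X" using pX by (simp add: posdef_def symmetric_mat_def)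
  have tCi: "transpose Ci = Ci" using Ci_sym by (simp add: symmetric_mat_def)
  have t1: "trace (?X ** ?S ** Ci ** ?Xi) = trace (Ci ** ?S)"
  proof -
    have "trace (?X ** ?S ** Ci ** ?Xi) = trace (?Xi ** (?X ** ?S ** Ci))" by (rule trace_mul_sym)
    also have "?Xi ** (?X ** ?S ** Ci) = ?S ** Ci" using XXi by (simp add: matrix_mul_assoc)
    also have "trace (?S ** Ci) = trace (Ci ** ?S)" by (rule trace_mul_sym)
    finally show ?thesis .
  qed
  have t2: "trace (Ci ** ?S ** ?X ** ?Xi) = trace (Ci ** ?S)"
  proof -
    have "Ci ** ?S ** ?X ** ?Xi = (Ci ** ?S) ** (?X ** ?Xi)" by (simp add: matrix_mul_assoc)
    then show ?thesis by (simp add: XXi)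
  qed
  have t3: "trace (Ci ** ?S) = b \<bullet> yy t"
  proof -
    have "trace (Ci ** ?S) = trace (transpose Ci ** ?S)" by (simp add: tCi)
    also have "\<dots> = vecM Ci \<bullet> vecM ?S" by (simp add: inner_vecM)
    also have "vecM ?S = transpose (calA A) *v yy t" by (simp only: SS_def calA_T)
    also have "vecM Ci \<bullet> (transpose (calA A) *v yy t) = (calA A *v vecM Ci) \<bullet> yy t"
      by (simp only: inner_mat transpose_transpose)
    also have "calA A *v vecM Ci = b" using Cinv_feas by (simp add: lin_feasible_def Ci_def)
    finally show ?thesis .
  qed
  have "Xd t ** ?Xi = (1/2) *\<^sub>R (?X ** ?S ** Ci ** ?Xi + Ci ** ?S ** ?X ** ?Xi) - ?X ** ?Xi"
    by (simp add: Xd_form[OF t] WW_def tX mm_diff mm_add mm_scale)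
  then have "trace (Xd t ** ?Xi) = (1/2) * (trace (?X ** ?S ** Ci ** ?Xi) + trace (Ci ** ?S ** ?X ** ?Xi)) - trace (?X ** ?Xi)"
    by (simp add: trace_sub trace_add trace_scale)
  also have "\<dots> = b \<bullet> yy t - real CARD('n)" by (simp add: t1 t2 t3 XXi trace_I)
  finally show ?thesis .
qed

lemma lndet_deriv:
  assumes t: "t \<ge> 0" and pX: "posdef (X t)"
  shows "((\<lambda>s. ln (det (X s))) has_real_derivative (b \<bullet> yy t - real CARD('n))) (at t within {0..})"
proof -
  have inv: "invertible (X t)" using pX qpd_invertible unfolding posdef_qpd by blast
  have dp: "det (X t) > 0" using pX qpd_det_pos unfolding posdef_qpd by blast
  have "((\<lambda>s. ln (det (X s))) has_real_derivative
      (1 / det (X t)) * (det (X t) * trace (Xd t ** matrix_inv (X t)))) (at t within {0..})"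
    by (rule DERIV_chain2[OF DERIV_ln_divide[OF dp] det_deriv_inv[OF deriv[OF t] inv]])
  moreover have "(1 / det (X t)) * (det (X t) * trace (Xd t ** matrix_inv (X t))) = b \<bullet> yy t - real CARD('n)"
    using dp by (simp add: trace_val[OF t pX])
  ultimately show ?thesis by simp
qed


lemma X_cont: "continuous_on {0..} X"
  unfolding continuous_on_eq_continuous_within
  using has_vector_derivative_continuous[OF deriv] by auto

lemma X_pd:
  assumes T: "T \<ge> 0"
  shows "posdef (X T)"
proof -
  have cont: "continuous_on {0..T} X" by (rule continuous_on_subset[OF X_cont]) auto
  have "qpd (X T)"
  proof (rule path_qpd[OF T cont])
    show "symmetric_mat (X s)" if "s \<in> {0..T}" for s using X_sym that by auto
    show "qpd (X 0)" using X0 by (simp add: posdef_qpd)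
  next
    fix s assume s: "s \<in> {0..T}" and below: "\<And>u. u \<in> {0..<s} \<Longrightarrow> qpd (X u)"
    show "det (X s) \<noteq> 0"
    proof (cases "s = 0")
      case True then show ?thesis using X0 qpd_det unfolding posdef_qpd by blast
    next
      case False
      then have sp: "0 < s" using s by simp
      have pu: "posdef (X u)" if "u \<in> {0..<s}" for u
        using below[OF that] X_sym[of u] that by (simp add: posdef_qpd)
      define n where "n = real CARD('n)"
      define h where "h u = ln (det (X u)) + n * u" for u
      define c where "c = exp (ln (det (X 0)) - n * s)"
      have cpos: "c > 0" by (simp add: c_def)
      have hd: "(h has_real_derivative (b \<bullet> yy v - n + n * 1)) (at v within {0..})"
        if v: "v \<in> {0..<s}" for v
        unfolding h_def n_def
        by (intro DERIV_add lndet_deriv pu[OF v] DERIV_cmult DERIV_ident) (use v in auto)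
      have lb: "c \<le> det (X u)" if u: "u \<in> {0..<s}" for u
      proof -
        have "h 0 \<le> h u"
        proof (rule DERIV_nonneg_imp_increasing_open[of 0 u h])
          show "0 \<le> u" using u by simp
          fix x assume x: "0 < x" "x < u"
          then have xs: "x \<in> {0..<s}" using u by auto
          have "(h has_real_derivative (b \<bullet> yy x - n + n * 1)) (at x within {0<..})"
            by (rule DERIV_subset[OF hd[OF xs]]) auto
          then have "(h has_real_derivative (b \<bullet> yy x - n + n * 1)) (at x)"
            using at_within_open[of x "{0<..}"] x by simp
          moreover have "b \<bullet> yy x - n + n * 1 \<ge> 0"
            using yy_nonneg[OF _ pu[OF xs]] xs by simp
          ultimately show "\<exists>y. (h has_real_derivative y) (at x) \<and> 0 \<le> y" by blast
        next
          show "continuous_on {0..u} h"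
          proof (rule DERIV_continuous_on)
            fix x assume "x \<in> {0..u}"
            then have xs: "x \<in> {0..<s}" using u by auto
            show "(h has_real_derivative (b \<bullet> yy x - n + n * 1)) (at x within {0..u})"
              by (rule DERIV_subset[OF hd[OF xs]]) auto
          qed
        qed
        then have "ln (det (X 0)) - n * s \<le> ln (det (X u))"
          using u by (simp add: h_def n_def) (smt (verit) mult_left_mono of_nat_0_le_iff)
        moreover have "det (X u) > 0" using pu[OF u] qpd_det_pos unfolding posdef_qpd by blast
        ultimately show ?thesis unfolding c_def
          by (metis exp_le_cancel_iff exp_ln)
      qed
      have "continuous_on {0..s} (\<lambda>u. det (X u))"
        by (rule continuous_on_det[OF continuous_on_subset[OF X_cont]]) auto
      then have "((\<lambda>u. det (X u)) \<longlongrightarrow> det (X s)) (at s within {0..s})"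
        using sp by (simp add: continuous_on_def)
      then have lim: "((\<lambda>u. det (X u)) \<longlongrightarrow> det (X s)) (at_left s)"
        using at_within_Icc_at_left[OF sp] by simp
      have ev: "eventually (\<lambda>u. c \<le> det (X u)) (at_left s)"
        using eventually_at_left_real[OF sp]
        by (rule eventually_mono) (use lb in auto)
      have "c \<le> det (X s)" by (rule tendsto_lowerbound[OF lim ev]) simp
      then show ?thesis using cpos by simp
    qed
  qed
  then show ?thesis using X_sym[OF T] by (simp add: posdef_qpd)
qed

lemma main_concl:
  shows "(\<forall>t\<ge>0. posdef (X t) \<longrightarrow>
            ((\<lambda>s. ln (det (X s))) has_real_derivative
               (b \<bullet> (matrix_inv (calA A ** Gmat C (X t) ** transpose (calA A)) *v b) - real CARD('n)))
               (at t within {0..}) \<and>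
            b \<bullet> (matrix_inv (calA A ** Gmat C (X t) ** transpose (calA A)) *v b) - real CARD('n)
               \<ge> - real CARD('n))
         \<and> (\<forall>T\<ge>0. posdef (X T))"
  using lndet_deriv yy_nonneg X_pd unfolding yy_def MM_def by auto

end


theorem theorem4p8:
  fixes C :: "real^'n::finite^'n" and A :: "'m::finite \<Rightarrow> real^'n^'n" and b :: "real^'m"
    and X Xd :: "real \<Rightarrow> real^'n^'n"
  assumes C_pd: "posdef C"
    and A_sym: "\<And>l. symmetric_mat (A l)"
    and A_indep: "lin_indep_family A"
    and Cinv_feas: "lin_feasible A b (matrix_inv C)"
    and deriv: "\<And>t. t \<ge> 0 \<Longrightarrow> (X has_vector_derivative Xd t) (at t within {0..})"
    and ode: "\<And>t. t \<ge> 0 \<Longrightarrow>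
       vecM (Xd t) = Gmat C (X t) *v (transpose (calA A) *v
           (matrix_inv (calA A ** Gmat C (X t) ** transpose (calA A)) *v b)) - vecM (X t)"
    and X0: "posdef (X 0)"
  shows "(\<forall>t\<ge>0. posdef (X t) \<longrightarrow>
            ((\<lambda>s. ln (det (X s))) has_real_derivative
               (b \<bullet> (matrix_inv (calA A ** Gmat C (X t) ** transpose (calA A)) *v b) - real CARD('n)))
               (at t within {0..}) \<and>
            b \<bullet> (matrix_inv (calA A ** Gmat C (X t) ** transpose (calA A)) *v b) - real CARD('n)
               \<ge> - real CARD('n))
         \<and> (\<forall>T\<ge>0. posdef (X T))"
  by (rule main_concl[OF C_pd A_sym A_indep Cinv_feas deriv ode X0])

end
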